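(* Let $J:[0,1]\to[0,\infty)$ with $\int_{\mathbb{Z}_p}J(|x|_p)dx=1$ (extended by zero outside $\mathbb{Z}_p$), with radial Fourier transform $\widehat J(|\xi|_p)$, and let $\boldsymbol{J}\varphi=J(|x|_p)\ast\varphi-\varphi$ on $L^2(\mathbb{Z}_p)$. For $r\in\mathbb{Z}$, $b\in\mathbb{Q}_p/\mathbb{Z}_p$, $k\in\{1,\dots,p-1\}$ let $\Psi_{rbk}(x)=p^{-r/2}\chi_p(p^{-1}k(p^rx-b))\Omega(|p^rx-b|_p)$. Then: (i) for $k\in\{1,\dots,p-1\}$, $r\le0$ and $b\in\mathbb{Q}_p/\mathbb{Z}_p$ with $bp^{-r}\in\mathbb{Z}_p$, $\boldsymbol{J}\Psi_{rbk}(x)=(\widehat J(p^{1-r})-1)\Psi_{rbk}(x)$, where $\widehat J(p^{1-r})$ is the value of $\widehat J$ at $|\xi|_p=p^{1-r}$; (ii) $\boldsymbol{J}\Omega(|x|_p)=0$.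
   Context: $p$ is a fixed prime; Haar measure with $\int_{\mathbb{Z}_p}dx=1$; $\chi_p(y)=\exp(2\pi i\{y\}_p)$ with $\{y\}_p$ the $p$-adic fractional part; $\mathbb{Q}_p/\mathbb{Z}_p$ is identified with the set of finite sums $\sum_{j=-m}^{-1}x_jp^j$, $x_j\in\{0,\dots,p-1\}$. $\Omega(|p^rx-b|_p)$ is the characteristic function of the ball $bp^{-r}+p^{-r}\mathbb{Z}_p$, and $\Omega(|x|_p)$ that of $\mathbb{Z}_p$. Fourier transform $\mathcal{F}\varphi(\xi)=\int\chi_p(\xi x)\varphi(x)dx$. *)

theory Defs
  imports "HOL-Probability.Probability"
begin

text \<open>p-adic integers are modelled by their digit sequences: x :: nat \<Rightarrow> nat with
  x = sum x_i p^i, all x_i < p.  The normalized Haar measure on Z_p is the product of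
  uniform measures on the digits.\<close>

definition Haar :: "nat \<Rightarrow> (nat \<Rightarrow> nat) measure" where
  "Haar p = (\<Pi>\<^sub>M i\<in>(UNIV::nat set). uniform_count_measure {..<p})"

text \<open>x mod p^n, as a natural number in [0, p^n).\<close>
definition zp_trunc :: "nat \<Rightarrow> nat \<Rightarrow> (nat \<Rightarrow> nat) \<Rightarrow> nat" where
  "zp_trunc p n x = (\<Sum>i<n. x i * p ^ i)"

definition zp_sub :: "nat \<Rightarrow> (nat \<Rightarrow> nat) \<Rightarrow> (nat \<Rightarrow> nat) \<Rightarrow> (nat \<Rightarrow> nat)" where
  "zp_sub p x y = (\<lambda>i. nat ((int (zp_trunc p (Suc i) x) - int (zp_trunc p (Suc i) y))
                        mod int (p ^ Suc i)) div p ^ i)"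

definition zp_shift :: "nat \<Rightarrow> (nat \<Rightarrow> nat) \<Rightarrow> (nat \<Rightarrow> nat)" where
  "zp_shift j x = (\<lambda>i. if i < j then 0 else x (i - j))"

definition zp_of_nat :: "nat \<Rightarrow> nat \<Rightarrow> (nat \<Rightarrow> nat)" where
  "zp_of_nat p a = (\<lambda>i. (a div p ^ i) mod p)"

definition padic_abs :: "nat \<Rightarrow> (nat \<Rightarrow> nat) \<Rightarrow> real" where
  "padic_abs p x = (if (\<forall>i. x i = 0) then 0 else real p powr (- real (LEAST i. x i \<noteq> 0)))"

text \<open>Q_p/Z_p identified with finite sums sum_{j=-m}^{-1} x_j p^j, i.e. the rationals a/p^n,
  0 \<le> a < p^n.\<close>
definition QpZp :: "nat \<Rightarrow> rat set" where
  "QpZp p = {q. \<exists>a n. a < p ^ n \<and> q = of_nat a / of_nat (p ^ n)}"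

definition rat_in_Zp :: "nat \<Rightarrow> rat \<Rightarrow> bool" where
  "rat_in_Zp p q = coprime (snd (quotient_of q)) (int p)"

text \<open>Writing p^r x - b = p^{-N} w with w = p^{r+N} x - b p^N in Z_p (N large), one has
  Omega(|p^r x - b|_p) = [w in p^N Z_p] and
  chi_p(p^{-1} k p^{-N} w) = exp(2 pi i k (w mod p^{N+1}) / p^{N+1}).\<close>
definition Psi :: "nat \<Rightarrow> int \<Rightarrow> rat \<Rightarrow> nat \<Rightarrow> (nat \<Rightarrow> nat) \<Rightarrow> complex" where
  "Psi p r b k x =
     (let N = (LEAST N::nat. - r \<le> int N \<and> b * of_nat (p ^ N) \<in> \<int>);
          a = nat \<lfloor>b * of_nat (p ^ N)\<rfloor>;
          w = zp_sub p (zp_shift (nat (r + int N)) x) (zp_of_nat p a)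
      in complex_of_real (real p powr (- real_of_int r / 2)) *
         (if zp_trunc p N w = 0
          then cis (2 * pi * real k * real (zp_trunc p (Suc N) w) / real (p ^ Suc N))
          else 0))"

text \<open>Fourier transform of a function on Z_p (extended by zero) at xi = p^{-n}:
  chi_p(p^{-n} x) = exp(2 pi i (x mod p^n)/p^n).\<close>
definition FT_Zp :: "nat \<Rightarrow> ((nat \<Rightarrow> nat) \<Rightarrow> complex) \<Rightarrow> nat \<Rightarrow> complex" where
  "FT_Zp p \<phi> n = (\<integral>x. cis (2 * pi * real (zp_trunc p n x) / real (p ^ n)) * \<phi> x \<partial>Haar p)"

text \<open>Radial Fourier transform of J(|x|_p): value at |xi|_p = p^n (taking xi = p^{-n}).\<close>
definition Jhat :: "nat \<Rightarrow> (real \<Rightarrow> real) \<Rightarrow> nat \<Rightarrow> complex" where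
  "Jhat p J n = FT_Zp p (\<lambda>x. complex_of_real (J (padic_abs p x))) n"

definition Jop :: "nat \<Rightarrow> (real \<Rightarrow> real) \<Rightarrow> ((nat \<Rightarrow> nat) \<Rightarrow> complex) \<Rightarrow> (nat \<Rightarrow> nat) \<Rightarrow> complex" where
  "Jop p J \<phi> x = (\<integral>y. complex_of_real (J (padic_abs p (zp_sub p x y))) * \<phi> y \<partial>Haar p) - \<phi> x"

end

theory Submission
  imports Defs
begin


lemma trunc_Suc: "zp_trunc p (Suc n) x = zp_trunc p n x + x n * p ^ n"
  by (simp add: zp_trunc_def)

lemma trunc_0[simp]: "zp_trunc p 0 x = 0"
  by (simp add: zp_trunc_def)

lemma trunc_less:
  assumes "\<forall>i. x i < p" shows "zp_trunc p n x < p ^ n"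
proof (induction n)
  case 0 then show ?case by simp
next
  case (Suc n)
  have "x n \<le> p - 1" using assms by (metis Suc_pred' bot_nat_0.extremum_strict less_Suc_eq_le linorder_neqE_nat)
  hence "x n * p ^ n \<le> (p - 1) * p ^ n" by simp
  moreover have "p ^ n + (p - 1) * p ^ n = p ^ Suc n" using assms
    by (metis Suc_pred' add.commute gr_zeroI less_zeroE mult_Suc power_Suc)
  ultimately show ?case using Suc trunc_Suc[of p n x] by linarith
qed

lemma trunc_of_nat:
  assumes "p > 0" shows "zp_trunc p n (zp_of_nat p a) = a mod p ^ n"
proof (induction n)
  case 0 then show ?case by simp
next
  case (Suc n)
  have "a mod (p ^ n * p) = p ^ n * (a div p ^ n mod p) + a mod p ^ n" by (rule mod_mult2_eq)
  then show ?case using Suc by (simp add: trunc_Suc zp_of_nat_def mult.commute)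
qed

lemma trunc_mod:
  assumes "n \<le> m" and dg: "\<forall>i. x i < p" shows "zp_trunc p m x mod p ^ n = zp_trunc p n x"
  using assms
proof (induction m)
  case 0 then show ?case by (simp add: zp_trunc_def)
next
  case (Suc m)
  show ?case
  proof (cases "n = Suc m")
    case True
    then show ?thesis using trunc_less[OF dg] by (metis mod_less)
  next
    case False
    hence "n \<le> m" using Suc by simp
    have "p ^ n dvd p ^ m" using \<open>n \<le> m\<close> by (simp add: le_imp_power_dvd)
    hence "(zp_trunc p m x + x m * p ^ m) mod p ^ n = zp_trunc p m x mod p ^ n"
      by (metis dvd_imp_mod_0 dvd_mult mod_add_right_eq add.right_neutral)
    then show ?thesis using Suc(1) \<open>n \<le> m\<close> dg by (simp add: trunc_Suc)
  qed
qed


definition esub :: "nat \<Rightarrow> (nat \<Rightarrow> nat) \<Rightarrow> (nat \<Rightarrow> nat) \<Rightarrow> nat \<Rightarrow> nat" where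
  "esub p x y j = nat ((int (zp_trunc p j x) - int (zp_trunc p j y)) mod int (p ^ j))"

lemma esub_step:
  assumes "p > 0" shows "esub p x y (Suc n) mod p ^ n = esub p x y n"
proof -
  have "(int (zp_trunc p (Suc n) x) - int (zp_trunc p (Suc n) y)) =
        (int (zp_trunc p n x) - int (zp_trunc p n y)) + (int (x n) - int (y n)) * int (p ^ n)"
    by (simp add: trunc_Suc algebra_simps)
  hence "((int (zp_trunc p (Suc n) x) - int (zp_trunc p (Suc n) y)) mod int (p ^ Suc n)) mod int (p ^ n)
      = (int (zp_trunc p n x) - int (zp_trunc p n y)) mod int (p ^ n)"
    by (simp add: mod_mod_cancel le_imp_power_dvd)
  moreover have "(int (zp_trunc p (Suc n) x) - int (zp_trunc p (Suc n) y)) mod int (p ^ Suc n) \<ge> 0"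
    using assms by simp
  ultimately show ?thesis unfolding esub_def
    by (metis nat_int nat_mod_distrib of_nat_0_le_iff)
qed

lemma esub_less: "p > 0 \<Longrightarrow> esub p x y j < p ^ j"
  unfolding esub_def by (simp add: nat_less_iff)

lemma trunc_sub:
  assumes "p > 0" shows "zp_trunc p n (zp_sub p x y) = esub p x y n"
proof (induction n)
  case 0 then show ?case by (simp add: esub_def)
next
  case (Suc n)
  have "zp_sub p x y n = esub p x y (Suc n) div p ^ n" by (simp add: zp_sub_def esub_def)
  then show ?case using Suc esub_step[OF assms, of x y n]
    by (simp add: trunc_Suc) (metis mod_div_mult_eq add.commute)
qed

lemma dig_sub:
  assumes "p > 0" shows "zp_sub p x y i < p"
proof -
  have "zp_sub p x y i = esub p x y (Suc i) div p ^ i" by (simp add: zp_sub_def esub_def)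
  moreover have "esub p x y (Suc i) < p ^ i * p" using esub_less[OF assms] by (metis power_Suc2)
  ultimately show ?thesis by (metis less_mult_imp_div_less mult.commute)
qed

lemma eq_by_trunc:
  assumes "p > 0" "\<And>n. zp_trunc p n x = zp_trunc p n y" shows "x = y"
proof
  fix i
  have "x i * p ^ i = y i * p ^ i" using assms(2)[of "Suc i"] assms(2)[of i] by (simp add: trunc_Suc)
  then show "x i = y i" using assms(1) by simp
qed

lemma sub_sub:
  assumes "p > 0" "\<forall>i. y i < p" shows "zp_sub p x (zp_sub p x y) = y"
proof (rule eq_by_trunc[OF assms(1)])
  fix n
  have "zp_trunc p n (zp_sub p x (zp_sub p x y)) =
     nat ((int (zp_trunc p n x) - int (nat ((int (zp_trunc p n x) - int (zp_trunc p n y)) mod int (p ^ n)))) mod int (p ^ n))"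
    using assms by (simp add: trunc_sub esub_def)
  also have "\<dots> = nat (int (zp_trunc p n y) mod int (p ^ n))"
    using assms(1) by (simp add: mod_diff_right_eq)
  also have "\<dots> = zp_trunc p n y" using trunc_less[OF assms(2)]
    by (simp add: nat_mod_distrib[symmetric] nat_int)
  finally show "zp_trunc p n (zp_sub p x (zp_sub p x y)) = zp_trunc p n y" .
qed



lemma space_Haar: "space (Haar p) = {x. \<forall>i. x i < p}"
  unfolding Haar_def space_PiM space_uniform_count_measure PiE_def extensional_def Pi_def by simp

lemma comp_meas: "(\<lambda>x. x i) \<in> Haar p \<rightarrow>\<^sub>M count_space UNIV"
proof -
  have "(\<lambda>x. x i) \<in> Haar p \<rightarrow>\<^sub>M uniform_count_measure {..<p}"
    unfolding Haar_def by (rule measurable_component_singleton) simp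
  hence "(\<lambda>x. x i) \<in> Haar p \<rightarrow>\<^sub>M count_space {..<p}"
    by (simp add: measurable_cong_sets[OF refl sets_uniform_count_measure_count_space])
  moreover have "(\<lambda>v::nat. v) \<in> count_space {..<p} \<rightarrow>\<^sub>M count_space UNIV" by simp
  ultimately show ?thesis using measurable_compose by blast
qed


lemma trunc_meas: "zp_trunc p n \<in> Haar p \<rightarrow>\<^sub>M count_space UNIV"
proof (induction n)
  case 0 then show ?case by (simp add: zp_trunc_def)
next
  case (Suc n)
  have e: "zp_trunc p (Suc n) = (\<lambda>x. zp_trunc p n x + x n * p ^ n)" by (simp add: trunc_Suc fun_eq_iff)
  have "(\<lambda>x. (zp_trunc p n x, x n)) \<in> Haar p \<rightarrow>\<^sub>M count_space UNIV \<Otimes>\<^sub>M count_space UNIV"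
    using Suc comp_meas by (rule measurable_Pair)
  hence "(\<lambda>x. (zp_trunc p n x, x n)) \<in> Haar p \<rightarrow>\<^sub>M count_space UNIV"
    using pair_measure_countable[of "UNIV::nat set" "UNIV::nat set"] by simp
  moreover have "(\<lambda>(a,b). a + b * p ^ n) \<in> count_space UNIV \<rightarrow>\<^sub>M (count_space UNIV :: nat measure)" by simp
  ultimately have "(\<lambda>x. (\<lambda>(a,b). a + b * p ^ n) (zp_trunc p n x, x n)) \<in> Haar p \<rightarrow>\<^sub>M count_space UNIV"
    using measurable_compose by blast
  then show ?case unfolding e by simp
qed

lemma prob_Haar: "p > 0 \<Longrightarrow> prob_space (Haar p)"
  unfolding Haar_def by (rule prob_space_PiM) (rule prob_space_uniform_count_measure, auto)

lemma cyl_emeasure: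
  assumes "p > 0" "\<forall>i<n. d i < p"
  shows "emeasure (Haar p) {x\<in>space (Haar p). \<forall>i<n. x i = d i} = ennreal ((1 / real p) ^ n)"
proof -
  have e: "{x\<in>space (Haar p). \<forall>i<n. x i = d i} =
     prod_emb UNIV (\<lambda>_. uniform_count_measure {..<p}) {..<n} (Pi\<^sub>E {..<n} (\<lambda>i. {d i}))"
    unfolding Haar_def by (auto simp: prod_emb_def space_PiM PiE_def extensional_def Pi_def)
  have "emeasure (Haar p) {x\<in>space (Haar p). \<forall>i<n. x i = d i} =
     (\<Prod>i\<in>{..<n}. emeasure (uniform_count_measure {..<p}) {d i})"
    unfolding e unfolding Haar_def
    by (rule emeasure_PiM_emb) (use assms in \<open>auto intro: prob_space_uniform_count_measure simp: sets_uniform_count_measure\<close>)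
  also have "\<dots> = (\<Prod>i\<in>{..<n}. ennreal (1 / real p))"
    using assms by (intro prod.cong refl) (simp add: emeasure_uniform_count_measure ennreal_of_nat_eq_real_of_nat divide_ennreal)
  also have "\<dots> = ennreal ((1 / real p) ^ n)"
    by (simp add: ennreal_power)
  finally show ?thesis .
qed

lemma trunc_cong: "(\<forall>i<n. x i = y i) \<Longrightarrow> zp_trunc p n x = zp_trunc p n y"
  unfolding zp_trunc_def by simp

lemma digit_of_trunc:
  assumes "\<forall>i. x i < p" "i < n"
  shows "zp_trunc p n x div p ^ i mod p = x i"
proof -
  have pp: "p > 0" using assms(1) by (metis gr_zeroI less_zeroE)
  have "zp_trunc p n x mod (p ^ i * p) = p ^ i * (zp_trunc p n x div p ^ i mod p) + zp_trunc p n x mod p ^ i"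
    by (rule mod_mult2_eq)
  hence "zp_trunc p n x div p ^ i mod p = zp_trunc p n x mod (p ^ i * p) div p ^ i"
    using pp by simp
  also have "zp_trunc p n x mod (p ^ i * p) = zp_trunc p (Suc i) x"
    using trunc_mod[of "Suc i" n x p] assms by (simp add: mult.commute)
  also have "\<dots> div p ^ i = x i"
    using trunc_less[OF assms(1), of i] pp by (simp add: trunc_Suc)
  finally show ?thesis .
qed

lemma trunc_eq_iff:
  assumes "\<forall>i. x i < p" "c < p ^ n"
  shows "zp_trunc p n x = c \<longleftrightarrow> (\<forall>i<n. x i = zp_of_nat p c i)"
proof
  assume "zp_trunc p n x = c"
  then show "\<forall>i<n. x i = zp_of_nat p c i" using digit_of_trunc[OF assms(1)] by (auto simp: zp_of_nat_def)
next
  have pp: "p > 0" using assms(1) by (metis gr_zeroI less_zeroE)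
  assume "\<forall>i<n. x i = zp_of_nat p c i"
  then have "zp_trunc p n x = zp_trunc p n (zp_of_nat p c)" by (rule trunc_cong)
  then show "zp_trunc p n x = c" using trunc_of_nat[OF pp] assms(2) by simp
qed

lemma trunc_set_sets: "{x\<in>space (Haar p). P (zp_trunc p n x)} \<in> sets (Haar p)"
proof -
  have "{x\<in>space (Haar p). P (zp_trunc p n x)} = zp_trunc p n -` {c. P c} \<inter> space (Haar p)" by auto
  then show ?thesis using trunc_meas[of p n] by (metis measurable_sets sets_count_space UNIV_I Pow_UNIV)
qed

lemma trunc_pt_sets: "{x\<in>space (Haar p). zp_trunc p n x = c} \<in> sets (Haar p)"
  using trunc_set_sets[of p "\<lambda>d. d = c" n] by simp

lemma trunc_pt_emeasure:
  assumes "p > 0" "c < p ^ n"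
  shows "emeasure (Haar p) {x\<in>space (Haar p). zp_trunc p n x = c} = ennreal ((1 / real p) ^ n)"
proof -
  have "{x\<in>space (Haar p). zp_trunc p n x = c} = {x\<in>space (Haar p). \<forall>i<n. x i = zp_of_nat p c i}"
    using trunc_eq_iff[OF _ assms(2)] by (auto simp: space_Haar)
  moreover have "\<forall>i<n. zp_of_nat p c i < p" using assms(1) by (simp add: zp_of_nat_def)
  ultimately show ?thesis using cyl_emeasure[OF assms(1)] by simp
qed

lemma trunc_set_emeasure:
  assumes "p > 0" "S \<subseteq> {..<p ^ n}"
  shows "emeasure (Haar p) {x\<in>space (Haar p). zp_trunc p n x \<in> S} = ennreal (real (card S) * (1 / real p) ^ n)"
proof -
  have fin: "finite S" using assms(2) finite_subset by blast
  have "{x\<in>space (Haar p). zp_trunc p n x \<in> S} = (\<Union>c\<in>S. {x\<in>space (Haar p). zp_trunc p n x = c})" by auto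
  also have "emeasure (Haar p) \<dots> = (\<Sum>c\<in>S. emeasure (Haar p) {x\<in>space (Haar p). zp_trunc p n x = c})"
    by (rule sum_emeasure[symmetric]) (auto simp: fin disjoint_family_on_def trunc_pt_sets)
  also have "\<dots> = (\<Sum>c\<in>S. ennreal ((1 / real p) ^ n))"
    using assms by (intro sum.cong refl trunc_pt_emeasure) auto
  also have "\<dots> = ennreal (real (card S) * (1 / real p) ^ n)"
    by (simp add: ennreal_of_nat_eq_real_of_nat ennreal_mult)
  finally show ?thesis .
qed


lemma nat_fun_meas:
  assumes "f \<in> Haar p \<rightarrow>\<^sub>M count_space UNIV" "\<And>y. y \<in> space (Haar p) \<Longrightarrow> f y < p"
  shows "f \<in> Haar p \<rightarrow>\<^sub>M uniform_count_measure {..<p}"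
proof -
  have "f \<in> Haar p \<rightarrow>\<^sub>M count_space {..<p}"
    unfolding measurable_count_space_eq2_countable
  proof (intro conjI ballI)
    show "f \<in> space (Haar p) \<rightarrow> {..<p}" using assms(2) by auto
    fix a assume "a \<in> {..<p}"
    show "f -` {a} \<inter> space (Haar p) \<in> sets (Haar p)"
      using assms(1) by (metis measurable_sets sets_count_space UNIV_I Pow_UNIV)
  qed
  then show ?thesis
    by (simp add: measurable_cong_sets[OF refl sets_uniform_count_measure_count_space])
qed

lemma sub_meas:
  assumes "p > 0"
  shows "zp_sub p x \<in> Haar p \<rightarrow>\<^sub>M Haar p"
proof -
  have comp: "(\<lambda>y. zp_sub p x y i) \<in> Haar p \<rightarrow>\<^sub>M uniform_count_measure {..<p}" for i
  proof (rule nat_fun_meas)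
    have e: "(\<lambda>y. zp_sub p x y i) = (\<lambda>y. (\<lambda>c. nat ((int (zp_trunc p (Suc i) x) - int c) mod int (p ^ Suc i)) div p ^ i) (zp_trunc p (Suc i) y))"
      by (simp add: zp_sub_def fun_eq_iff)
    show "(\<lambda>y. zp_sub p x y i) \<in> Haar p \<rightarrow>\<^sub>M count_space UNIV"
      unfolding e by (rule measurable_compose[OF trunc_meas]) simp
    show "zp_sub p x y i < p" if "y \<in> space (Haar p)" for y using dig_sub[OF assms] .
  qed
  have "(\<lambda>y i. zp_sub p x y i) \<in> Haar p \<rightarrow>\<^sub>M (\<Pi>\<^sub>M i\<in>(UNIV::nat set). uniform_count_measure {..<p})"
    by (rule measurable_PiM_single') (use comp dig_sub[OF assms] in \<open>auto simp: space_uniform_count_measure\<close>)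
  then show ?thesis unfolding Haar_def by simp
qed

lemma cyl_as_trunc:
  assumes "J \<subseteq> {..<n}" "\<forall>j\<in>J. A j \<subseteq> {..<p}"
  shows "prod_emb UNIV (\<lambda>_. uniform_count_measure {..<p}) J (Pi\<^sub>E J A) =
    {y\<in>space (Haar p). zp_trunc p n y \<in> {c\<in>{..<p ^ n}. \<forall>j\<in>J. zp_of_nat p c j \<in> A j}}"
proof -
  have "prod_emb UNIV (\<lambda>_. uniform_count_measure {..<p}) J (Pi\<^sub>E J A) = {y\<in>space (Haar p). \<forall>j\<in>J. y j \<in> A j}"
    unfolding Haar_def by (auto simp: prod_emb_def space_PiM PiE_def extensional_def Pi_def)
  also have "\<dots> = {y\<in>space (Haar p). zp_trunc p n y \<in> {c\<in>{..<p ^ n}. \<forall>j\<in>J. zp_of_nat p c j \<in> A j}}"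
  proof (intro Collect_cong conj_cong refl)
    fix y assume "y \<in> space (Haar p)"
    hence dg: "\<forall>i. y i < p" by (simp add: space_Haar)
    have "zp_of_nat p (zp_trunc p n y) j = y j" if "j \<in> J" for j
      using digit_of_trunc[OF dg, of j n] that assms(1) by (auto simp: zp_of_nat_def)
    then show "(\<forall>j\<in>J. y j \<in> A j) = (zp_trunc p n y \<in> {c\<in>{..<p ^ n}. \<forall>j\<in>J. zp_of_nat p c j \<in> A j})"
      using trunc_less[OF dg, of n] by auto
  qed
  finally show ?thesis .
qed

lemma distr_sub:
  assumes "p > 0"
  shows "distr (Haar p) (Haar p) (zp_sub p x) = Haar p"
proof -
  let ?U = "\<lambda>_::nat. uniform_count_measure {..<p}"
  interpret P: prob_space "Haar p" using prob_Haar[OF assms] .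
  have fm: "finite_measure (distr (Haar p) (Haar p) (zp_sub p x))"
    using P.prob_space_distr[OF sub_meas[OF assms]] unfolding prob_space_def by blast
  show ?thesis
  proof (rule measure_eqI_PiM_infinite[of _ UNIV ?U])
    show "sets (distr (Haar p) (Haar p) (zp_sub p x)) = sets (Pi\<^sub>M UNIV ?U)" by (simp add: Haar_def)
    show "sets (Haar p) = sets (Pi\<^sub>M UNIV ?U)" by (simp add: Haar_def)
    show "finite_measure (distr (Haar p) (Haar p) (zp_sub p x))" by (rule fm)
    fix A J assume J: "finite (J::nat set)" "J \<subseteq> UNIV" and A: "\<And>i. i \<in> J \<Longrightarrow> A i \<in> sets (?U i)"
    obtain n where n: "J \<subseteq> {..<n}" using J(1) finite_nat_bounded by blast
    have Asub: "\<forall>j\<in>J. A j \<subseteq> {..<p}" using A by (auto simp: sets_uniform_count_measure)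
    define S where "S = {c\<in>{..<p ^ n}. \<forall>j\<in>J. zp_of_nat p c j \<in> A j}"
    define t where "t = zp_trunc p n x"
    define g where "g c = nat ((int t - int c) mod int (p ^ n))" for c
    define S' where "S' = {c\<in>{..<p ^ n}. g c \<in> S}"
    have E: "prod_emb UNIV ?U J (Pi\<^sub>E J A) = {y\<in>space (Haar p). zp_trunc p n y \<in> S}"
      unfolding S_def by (rule cyl_as_trunc[OF n Asub])
    have Esets: "{y\<in>space (Haar p). zp_trunc p n y \<in> S} \<in> sets (Haar p)" by (rule trunc_set_sets)
    have pre: "zp_sub p x -` {y\<in>space (Haar p). zp_trunc p n y \<in> S} \<inter> space (Haar p) =
        {y\<in>space (Haar p). zp_trunc p n y \<in> S'}"
    proof -
      have "zp_sub p x y \<in> space (Haar p)" for y using dig_sub[OF assms] by (simp add: space_Haar)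
      moreover have "zp_trunc p n (zp_sub p x y) = g (zp_trunc p n y)" for y
        by (simp add: trunc_sub[OF assms] esub_def g_def t_def)
      moreover have "y \<in> space (Haar p) \<Longrightarrow> zp_trunc p n y < p ^ n" for y
        using trunc_less by (simp add: space_Haar)
      ultimately show ?thesis unfolding S'_def by auto
    qed
    have gl: "g c < p ^ n" for c using assms by (simp add: g_def nat_less_iff)
    have gg: "c < p ^ n \<Longrightarrow> g (g c) = c" for c
    proof -
      assume c: "c < p ^ n"
      have "g (g c) = nat ((int t - (int t - int c) mod int (p ^ n)) mod int (p ^ n))"
        using assms by (simp add: g_def)
      also have "\<dots> = nat (int c mod int (p ^ n))" by (simp add: mod_diff_right_eq)
      also have "\<dots> = c" using c by simp
      finally show ?thesis .
    qed
    have "bij_betw g S' S"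
      by (rule bij_betw_byWitness[where f' = g]) (auto simp: S'_def S_def gg gl)
    hence card: "card S' = card S" by (rule bij_betw_same_card)
    have "emeasure (distr (Haar p) (Haar p) (zp_sub p x)) (prod_emb UNIV ?U J (Pi\<^sub>E J A))
        = emeasure (Haar p) {y\<in>space (Haar p). zp_trunc p n y \<in> S'}"
      unfolding E by (subst emeasure_distr[OF sub_meas[OF assms] Esets]) (simp only: pre)
    also have "\<dots> = ennreal (real (card S') * (1 / real p) ^ n)"
      by (rule trunc_set_emeasure[OF assms]) (auto simp: S'_def)
    also have "\<dots> = emeasure (Haar p) {y\<in>space (Haar p). zp_trunc p n y \<in> S}"
      unfolding card by (rule trunc_set_emeasure[OF assms, symmetric]) (auto simp: S_def)
    finally show "emeasure (distr (Haar p) (Haar p) (zp_sub p x)) (prod_emb UNIV ?U J (Pi\<^sub>E J A))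
        = emeasure (Haar p) (prod_emb UNIV ?U J (Pi\<^sub>E J A))" unfolding E .
  qed
qed



lemma root_sum:
  assumes "p > 0" "\<not> int p dvd j"
  shows "(\<Sum>d<p. cis (2 * pi * of_int j * real d / real p)) = 0"
proof -
  define z where "z = cis (2 * pi * of_int j / real p)"
  have zp: "z ^ d = cis (2 * pi * of_int j * real d / real p)" for d
  proof -
    have "z ^ d = cis (real d * (2 * pi * of_int j / real p))" unfolding z_def by (rule Complex.DeMoivre)
    also have "real d * (2 * pi * of_int j / real p) = 2 * pi * of_int j * real d / real p" by simp
    finally show ?thesis .
  qed
  have "z ^ p = cis (2 * pi * of_int j)" using zp[of p] assms(1) by simp
  also have "\<dots> = 1" by (rule cis_multiple_2pi) simp
  finally have "z ^ p = 1" .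
  moreover have "z \<noteq> 1"
  proof
    assume "z = 1"
    hence "exp (\<i> * complex_of_real (2 * pi * of_int j / real p)) = 1" by (simp add: z_def cis_conv_exp)
    then obtain n :: int where n: "2 * pi * of_int j / real p = of_int (2 * n) * pi" by (auto simp: exp_eq_1)
    hence "real_of_int j = real_of_int (n * int p)" using assms(1) by (simp add: field_simps)
    hence "j = n * int p" by (simp only: of_int_eq_iff)
    then show False using assms(2) by simp
  qed
  ultimately have "(\<Sum>d<p. z ^ d) = 0" by (simp add: sum_gp_strict)
  then show ?thesis using zp by simp
qed

lemma root_sum1:
  assumes "p > 0" "\<not> int p dvd j"
  shows "(\<Sum>d<p. if d = 0 then 0 else cis (2 * pi * of_int j * real d / real p)) = -1"
proof -
  have "(\<Sum>d<p. cis (2 * pi * of_int j * real d / real p)) =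
        (\<Sum>d<p. if d = 0 then 0 else cis (2 * pi * of_int j * real d / real p)) + 1"
  proof -
    have "(\<Sum>d<p. cis (2 * pi * of_int j * real d / real p)) =
        (\<Sum>d<p. (if d = 0 then 0 else cis (2 * pi * of_int j * real d / real p)) + (if d = 0 then 1 else 0))"
      by (intro sum.cong) auto
    also have "\<dots> = (\<Sum>d<p. if d = 0 then 0 else cis (2 * pi * of_int j * real d / real p)) + 1"
      using assms(1) by (simp add: sum.distrib)
    finally show ?thesis .
  qed
  then show ?thesis using root_sum[OF assms] by (metis add_eq_0_iff2)
qed

lemma sum_split:
  fixes f :: "nat \<Rightarrow> 'a::comm_monoid_add"
  shows "(\<Sum>c<q * m. f c) = (\<Sum>c0<q. \<Sum>d<m. f (c0 + q * d))"
proof (induction m)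
  case 0 then show ?case by simp
next
  case (Suc m)
  have "(\<Sum>c<q * Suc m. f c) = (\<Sum>c<q * m. f c) + (\<Sum>c\<in>{q*m..<q*m+q}. f c)"
    by (simp add: sum.atLeastLessThan_concat[symmetric] lessThan_atLeast0 add.commute)
  also have "(\<Sum>c\<in>{q*m..<q*m+q}. f c) = (\<Sum>c0<q. f (c0 + q * m))"
    by (simp add: sum.shift_bounds_nat_ivl[of f 0 "q*m" q, simplified] lessThan_atLeast0 add.commute)
  finally show ?case using Suc by (simp add: sum.distrib)
qed

definition vdig :: "nat \<Rightarrow> nat \<Rightarrow> nat" where
  "vdig p c = (LEAST i. zp_of_nat p c i \<noteq> 0)"

lemma digit_low:
  assumes "p > 0" "c0 < p ^ N" "i < N"
  shows "zp_of_nat p (c0 + p ^ N * d) i = zp_of_nat p c0 i"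
proof -
  have "p ^ N = p ^ i * p ^ (N - i)" using assms(3) by (simp add: power_add[symmetric])
  hence "(c0 + p ^ N * d) div p ^ i = c0 div p ^ i + p ^ (N - i) * d" using assms(1) by (simp add: mult.assoc)
  moreover have "p dvd p ^ (N - i)" using assms(3) by simp
  ultimately show ?thesis unfolding zp_of_nat_def by (simp add: mod_add_right_eq[symmetric])
qed

lemma digit_nonzero_exists:
  assumes "p > 0" "c0 < p ^ N" "c0 \<noteq> 0"
  shows "\<exists>i<N. zp_of_nat p c0 i \<noteq> 0"
proof (rule ccontr)
  assume "\<not> ?thesis"
  hence "\<forall>i<N. zp_of_nat p c0 i = 0" by auto
  hence "zp_trunc p N (zp_of_nat p c0) = 0" by (simp add: zp_trunc_def)
  moreover have "zp_trunc p N (zp_of_nat p c0) = c0"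
  proof -
    have "zp_trunc p n (zp_of_nat p a) = a mod p ^ n" for n a
    proof (induction n)
      case 0 then show ?case by (simp add: zp_trunc_def)
    next
      case (Suc n)
      have "a mod (p ^ n * p) = p ^ n * (a div p ^ n mod p) + a mod p ^ n" by (rule mod_mult2_eq)
      then show ?case using Suc by (simp add: zp_trunc_def zp_of_nat_def mult.commute)
    qed
    then show ?thesis using assms(2) by simp
  qed
  ultimately show False using assms(3) by simp
qed

lemma Least_agree:
  assumes "P j" "j < M" "\<And>i. i < M \<Longrightarrow> P i \<longleftrightarrow> Q i"
  shows "(LEAST i::nat. P i) = (LEAST i. Q i)"
proof -
  have l: "(LEAST i. P i) \<le> j" using assms(1) by (rule Least_le)
  have pl: "P (LEAST i. P i)" using assms(1) by (rule LeastI)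
  show ?thesis
  proof (rule Least_equality[symmetric])
    show "Q (LEAST i. P i)" using pl l assms by auto
    fix y assume "Q y"
    show "(LEAST i. P i) \<le> y"
    proof (rule ccontr)
      assume "\<not> (LEAST i. P i) \<le> y"
      hence "y < (LEAST i. P i)" by simp
      hence "\<not> P y" by (rule not_less_Least)
      moreover have "y < M" using \<open>y < (LEAST i. P i)\<close> l assms(2) by simp
      ultimately show False using \<open>Q y\<close> assms(3) by auto
    qed
  qed
qed

lemma vdig_shift:
  assumes "p > 0" "c0 < p ^ N" "c0 \<noteq> 0"
  shows "vdig p (c0 + p ^ N * d) = vdig p c0"
proof -
  obtain j where "j < N" "zp_of_nat p c0 j \<noteq> 0" using digit_nonzero_exists[OF assms] by blast
  then show ?thesis unfolding vdig_def
    by (intro Least_agree[symmetric, of _ j N]) (auto simp: digit_low[OF assms(1,2)])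
qed

lemma vdig_top:
  assumes "p > 0" "0 < d" "d < p"
  shows "vdig p (p ^ N * d) = N"
  unfolding vdig_def
proof (rule Least_equality)
  show "zp_of_nat p (p ^ N * d) N \<noteq> 0" using assms by (simp add: zp_of_nat_def)
  fix y assume "zp_of_nat p (p ^ N * d) y \<noteq> 0"
  show "N \<le> y"
  proof (rule ccontr)
    assume "\<not> N \<le> y"
    hence "zp_of_nat p (0 + p ^ N * d) y = zp_of_nat p 0 y" using assms(1) by (intro digit_low) auto
    then show False using \<open>zp_of_nat p (p ^ N * d) y \<noteq> 0\<close> by (simp add: zp_of_nat_def)
  qed
qed


definition psi :: "nat \<Rightarrow> nat \<Rightarrow> nat \<Rightarrow> int \<Rightarrow> complex" where
  "psi p N k u = (if int (p ^ N) dvd u then cis (2 * pi * real k * of_int u / real (p ^ Suc N)) else 0)"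

definition Wt :: "nat \<Rightarrow> (nat \<Rightarrow> complex) \<Rightarrow> nat \<Rightarrow> complex" where
  "Wt p w c = (if c = 0 then 0 else w (vdig p c))"

lemma cis_split:
  assumes "p > 0"
  shows "cis (2 * pi * real k * of_int (v - int (p ^ N) * int d) / real (p ^ Suc N)) =
         cis (2 * pi * real k * of_int v / real (p ^ Suc N)) * cis (2 * pi * of_int (- int k) * real d / real p)"
proof -
  have "2 * pi * real k * of_int (v - int (p ^ N) * int d) / real (p ^ Suc N) =
        2 * pi * real k * of_int v / real (p ^ Suc N) + 2 * pi * of_int (- int k) * real d / real p"
    using assms by (simp add: field_simps)
  then show ?thesis by (simp add: cis_mult)
qed

lemma psi_split:
  assumes "p > 0"
  shows "psi p N k (u - int (c0 + p ^ N * d)) =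
    (if int (p ^ N) dvd (u - int c0) then cis (2 * pi * real k * of_int (u - int c0) / real (p ^ Suc N))
        * cis (2 * pi * of_int (- int k) * real d / real p) else 0)"
proof -
  have e: "u - int (c0 + p ^ N * d) = (u - int c0) - int (p ^ N) * int d" by simp
  have "int (p ^ N) dvd (u - int c0) - int (p ^ N) * int d \<longleftrightarrow> int (p ^ N) dvd (u - int c0)"
    by (metis dvd_diff_commute dvd_triv_left dvd_diff diff_diff_eq2 diff_add_cancel)
  then show ?thesis unfolding psi_def e using cis_split[OF assms, of k "u - int c0" N d] by simp
qed

lemma E_split:
  assumes "p > 0"
  shows "cis (2 * pi * real (c0 + p ^ N * d) / real (p ^ Suc N)) =
         cis (2 * pi * real c0 / real (p ^ Suc N)) * cis (2 * pi * of_int 1 * real d / real p)"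
proof -
  have "2 * pi * real (c0 + p ^ N * d) / real (p ^ Suc N) =
        2 * pi * real c0 / real (p ^ Suc N) + 2 * pi * of_int 1 * real d / real p"
    using assms by (simp add: field_simps)
  then show ?thesis by (simp add: cis_mult)
qed

lemma main_sum:
  assumes p: "p > 1" and k: "\<not> int p dvd int k"
  shows "(\<Sum>c<p ^ Suc N. psi p N k (u - int c) * Wt p w c) =
         psi p N k u * (\<Sum>c<p ^ Suc N. cis (2 * pi * real c / real (p ^ Suc N)) * Wt p w c)"
proof -
  have p0: "p > 0" using p by simp
  have k': "\<not> int p dvd - int k" using k by simp
  have one: "\<not> int p dvd 1" using p by simp
  have pM: "p ^ Suc N = p ^ N * p" by simp
  have W0: "Wt p w (p ^ N * d) = (if d = 0 then 0 else w N)" if "d < p" for d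
    using vdig_top[OF p0, of d N] that by (simp add: Wt_def)
  have Wz: "Wt p w 0 = 0" by (simp add: Wt_def)
  have W1: "Wt p w (c0 + p ^ N * d) = w (vdig p c0)" if "0 < c0" "c0 < p ^ N" for c0 d
    using vdig_shift[OF p0 that(2), of d] that by (simp add: Wt_def)
  have R: "(\<Sum>d<p. cis (2 * pi * real (c0 + p ^ N * d) / real (p ^ Suc N)) * Wt p w (c0 + p ^ N * d))
      = (if c0 = 0 then - w N else 0)" if "c0 < p ^ N" for c0
  proof (cases "c0 = 0")
    case True
    have "(\<Sum>d<p. cis (2 * pi * real (c0 + p ^ N * d) / real (p ^ Suc N)) * Wt p w (c0 + p ^ N * d))
        = (\<Sum>d<p. w N * (if d = 0 then 0 else cis (2 * pi * of_int 1 * real d / real p)))"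
      using True by (intro sum.cong refl) (simp add: E_split[OF p0, of 0] W0 Wz mult.assoc)
    also have "\<dots> = w N * (- 1)" by (simp add: sum_distrib_left[symmetric] root_sum1[OF p0 one])
    finally show ?thesis using True by simp
  next
    case False
    have "(\<Sum>d<p. cis (2 * pi * real (c0 + p ^ N * d) / real (p ^ Suc N)) * Wt p w (c0 + p ^ N * d))
        = (\<Sum>d<p. (cis (2 * pi * real c0 / real (p ^ Suc N)) * w (vdig p c0)) * cis (2 * pi * of_int 1 * real d / real p))"
      using False that by (intro sum.cong refl, subst E_split[OF p0], simp add: W1)
    also have "\<dots> = 0" using root_sum[OF p0 one] by (simp add: sum_distrib_left[symmetric])
    finally show ?thesis using False by simp
  qed
  have L: "(\<Sum>d<p. psi p N k (u - int (c0 + p ^ N * d)) * Wt p w (c0 + p ^ N * d))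
      = (if c0 = 0 then psi p N k u * (- w N) else 0)" if "c0 < p ^ N" for c0
  proof (cases "c0 = 0")
    case True
    have "(\<Sum>d<p. psi p N k (u - int (c0 + p ^ N * d)) * Wt p w (c0 + p ^ N * d))
        = (\<Sum>d<p. (psi p N k u * w N) * (if d = 0 then 0 else cis (2 * pi * of_int (- int k) * real d / real p)))"
      using True by (intro sum.cong refl, subst psi_split[OF p0], simp add: W0 Wz psi_def)
    also have "\<dots> = psi p N k u * w N * (- 1)" by (simp add: sum_distrib_left[symmetric] root_sum1[OF p0 k'])
    finally show ?thesis using True by simp
  next
    case False
    show ?thesis
    proof (cases "int (p ^ N) dvd (u - int c0)")
      case True
      have "(\<Sum>d<p. psi p N k (u - int (c0 + p ^ N * d)) * Wt p w (c0 + p ^ N * d))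
        = (\<Sum>d<p. (cis (2 * pi * real k * of_int (u - int c0) / real (p ^ Suc N)) * w (vdig p c0))
             * cis (2 * pi * of_int (- int k) * real d / real p))"
        using False True that by (intro sum.cong refl, subst psi_split[OF p0], simp add: W1)
      also have "\<dots> = 0" using root_sum[OF p0 k'] by (simp add: sum_distrib_left[symmetric])
      finally show ?thesis using False by simp
    next
      case nd: False
      have "(\<Sum>d<p. psi p N k (u - int (c0 + p ^ N * d)) * Wt p w (c0 + p ^ N * d)) = (\<Sum>d<p. 0)"
        using nd by (intro sum.cong refl, subst psi_split[OF p0], simp)
      then show ?thesis using False by simp
    qed
  qed
  have "(\<Sum>c<p ^ Suc N. psi p N k (u - int c) * Wt p w c) =
        (\<Sum>c0<p ^ N. \<Sum>d<p. psi p N k (u - int (c0 + p ^ N * d)) * Wt p w (c0 + p ^ N * d))"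
    unfolding pM by (rule sum_split)
  also have "\<dots> = (\<Sum>c0<p ^ N. if c0 = 0 then psi p N k u * (- w N) else 0)"
    by (intro sum.cong refl L) simp
  also have "\<dots> = psi p N k u * (- w N)" using p0 by simp
  also have "\<dots> = psi p N k u * (\<Sum>c0<p ^ N. if c0 = 0 then - w N else 0)" using p0 by simp
  also have "(\<Sum>c0<p ^ N. if c0 = 0 then - w N else 0) =
        (\<Sum>c0<p ^ N. \<Sum>d<p. cis (2 * pi * real (c0 + p ^ N * d) / real (p ^ Suc N)) * Wt p w (c0 + p ^ N * d))"
    by (intro sum.cong refl R[symmetric]) simp
  also have "\<dots> = (\<Sum>c<p ^ Suc N. cis (2 * pi * real c / real (p ^ Suc N)) * Wt p w c)"
    unfolding pM by (rule sum_split[symmetric])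
  finally show ?thesis .
qed



lemma subst_sub:
  fixes f :: "(nat \<Rightarrow> nat) \<Rightarrow> complex"
  assumes "p > 0" "f \<in> borel_measurable (Haar p)"
  shows "(\<integral>z. f z \<partial>Haar p) = (\<integral>y. f (zp_sub p x y) \<partial>Haar p)"
proof -
  have "(\<integral>z. f z \<partial>distr (Haar p) (Haar p) (zp_sub p x)) = (\<integral>y. f (zp_sub p x y) \<partial>Haar p)"
    by (rule integral_distr[OF sub_meas[OF assms(1)] assms(2)])
  then show ?thesis by (simp add: distr_sub[OF assms(1)])
qed

lemma abs_trunc:
  assumes "p > 0" "z \<in> space (Haar p)" "zp_trunc p M z = c" "c \<noteq> 0"
  shows "padic_abs p z = real p powr (- real (vdig p c))"
proof -
  have dg: "\<forall>i. z i < p" using assms(2) by (simp add: space_Haar)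
  have cl: "c < p ^ M" using trunc_less[OF dg] assms(3) by blast
  have zi: "\<forall>i<M. z i = zp_of_nat p c i" using trunc_eq_iff[OF dg cl] assms(3) by blast
  obtain j where j: "j < M" "zp_of_nat p c j \<noteq> 0" using digit_nonzero_exists[OF assms(1) cl assms(4)] by blast
  have nz: "\<not> (\<forall>i. z i = 0)" using zi j by (metis)
  have le: "(LEAST i. z i \<noteq> 0) = vdig p c" unfolding vdig_def
    by (rule Least_agree[of _ j M]) (use zi j in auto)
  show ?thesis unfolding padic_abs_def if_not_P[OF nz] le ..
qed

lemma trunc_pt_measure:
  assumes "p > 0" "c < p ^ n"
  shows "measure (Haar p) {x\<in>space (Haar p). zp_trunc p n x = c} = (1 / real p) ^ n"
  using trunc_pt_emeasure[OF assms] by (simp add: measure_def)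

lemma int_decomp:
  fixes h :: "nat \<Rightarrow> complex" and M :: nat and J :: "real \<Rightarrow> real" and p :: nat
  assumes p: "p > 0" and J: "integrable (Haar p) (\<lambda>z. J (padic_abs p z))"
  defines "S0 \<equiv> {z\<in>space (Haar p). zp_trunc p M z = 0}"
  defines "w \<equiv> (\<lambda>m. complex_of_real (J (real p powr (- real m))))"
  shows "(\<integral>z. complex_of_real (J (padic_abs p z)) * h (zp_trunc p M z) \<partial>Haar p) =
     h 0 * complex_of_real (\<integral>z. J (padic_abs p z) * indicator S0 z \<partial>Haar p)
     + (\<Sum>c<p ^ M. h c * Wt p w c) * complex_of_real ((1 / real p) ^ M)"
proof -
  define Sc where "Sc c = {z\<in>space (Haar p). zp_trunc p M z = c}" for c
  have Sc_sets: "Sc c \<in> sets (Haar p)" for c unfolding Sc_def by (rule trunc_pt_sets)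
  have S0_sets: "S0 \<in> sets (Haar p)" unfolding S0_def by (rule trunc_pt_sets)
  interpret P: prob_space "Haar p" using prob_Haar[OF p] .
  have pw: "complex_of_real (J (padic_abs p z)) * h (zp_trunc p M z) =
     h 0 * complex_of_real (J (padic_abs p z) * indicator S0 z)
     + (\<Sum>c<p ^ M. h c * Wt p w c * complex_of_real (indicator (Sc c) z))"
    if z: "z \<in> space (Haar p)" for z
  proof -
    have dg: "\<forall>i. z i < p" using z by (simp add: space_Haar)
    have tl: "zp_trunc p M z < p ^ M" using trunc_less[OF dg] .
    have "(\<Sum>c<p ^ M. h c * Wt p w c * complex_of_real (indicator (Sc c) z)) =
          (\<Sum>c<p ^ M. if zp_trunc p M z = c then h c * Wt p w c else 0)"
      by (intro sum.cong refl) (simp add: Sc_def indicator_def z)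
    also have "\<dots> = h (zp_trunc p M z) * Wt p w (zp_trunc p M z)"
      using tl by simp
    finally have s: "(\<Sum>c<p ^ M. h c * Wt p w c * complex_of_real (indicator (Sc c) z)) =
       h (zp_trunc p M z) * Wt p w (zp_trunc p M z)" .
    show ?thesis
    proof (cases "zp_trunc p M z = 0")
      case True
      then show ?thesis using s z by (simp add: S0_def indicator_def Wt_def)
    next
      case False
      have "padic_abs p z = real p powr (- real (vdig p (zp_trunc p M z)))"
        using abs_trunc[OF p z refl False] .
      then show ?thesis using s z False by (simp add: S0_def indicator_def Wt_def w_def)
    qed
  qed
  have i1: "integrable (Haar p) (\<lambda>z. J (padic_abs p z) * indicator S0 z)"
    by (rule integrable_real_mult_indicator[OF S0_sets J])
  have i2: "integrable (Haar p) (\<lambda>z. complex_of_real (indicator (Sc c) z :: real))" for c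
    using Sc_sets by (intro integrable_of_real integrable_real_indicator) (auto simp: less_top[symmetric] P.emeasure_finite)
  have "(\<integral>z. complex_of_real (J (padic_abs p z)) * h (zp_trunc p M z) \<partial>Haar p) =
     (\<integral>z. h 0 * complex_of_real (J (padic_abs p z) * indicator S0 z)
     + (\<Sum>c<p ^ M. h c * Wt p w c * complex_of_real (indicator (Sc c) z)) \<partial>Haar p)"
    by (rule Bochner_Integration.integral_cong[OF refl pw])
  also have "\<dots> = (\<integral>z. h 0 * complex_of_real (J (padic_abs p z) * indicator S0 z) \<partial>Haar p)
     + (\<integral>z. (\<Sum>c<p ^ M. h c * Wt p w c * complex_of_real (indicator (Sc c) z)) \<partial>Haar p)"
  proof (rule Bochner_Integration.integral_add)
    have "integrable (Haar p) (\<lambda>z. complex_of_real (J (padic_abs p z) * indicator S0 z))"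
      using i1 by (rule integrable_of_real)
    then show "integrable (Haar p) (\<lambda>z. h 0 * complex_of_real (J (padic_abs p z) * indicator S0 z))"
      by (rule integrable_mult_right)
    show "integrable (Haar p) (\<lambda>z. \<Sum>c<p ^ M. h c * Wt p w c * complex_of_real (indicator (Sc c) z))"
      by (rule Bochner_Integration.integrable_sum, rule integrable_mult_right, rule i2)
  qed
  also have "(\<integral>z. (\<Sum>c<p ^ M. h c * Wt p w c * complex_of_real (indicator (Sc c) z)) \<partial>Haar p)
     = (\<Sum>c<p ^ M. (\<integral>z. h c * Wt p w c * complex_of_real (indicator (Sc c) z) \<partial>Haar p))"
    by (rule Bochner_Integration.integral_sum) (use i2 in auto)
  also have "\<dots> = (\<Sum>c<p ^ M. h c * Wt p w c * complex_of_real ((1 / real p) ^ M))"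
  proof (intro sum.cong refl)
    fix c assume "c \<in> {..<p ^ M}"
    hence "measure (Haar p) (Sc c) = (1 / real p) ^ M" unfolding Sc_def using trunc_pt_measure[OF p] by simp
    then show "(\<integral>z. h c * Wt p w c * complex_of_real (indicator (Sc c) z) \<partial>Haar p) =
          h c * Wt p w c * complex_of_real ((1 / real p) ^ M)"
      using Sc_sets by simp
  qed
  also have "\<dots> = (\<Sum>c<p ^ M. h c * Wt p w c) * complex_of_real ((1 / real p) ^ M)"
    by (simp add: sum_distrib_right)
  finally have X: "(\<integral>z. complex_of_real (J (padic_abs p z)) * h (zp_trunc p M z) \<partial>Haar p) =
     (\<integral>z. h 0 * complex_of_real (J (padic_abs p z) * indicator S0 z) \<partial>Haar p) +
     (\<Sum>c<p ^ M. h c * Wt p w c) * complex_of_real ((1 / real p) ^ M)" .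
  show ?thesis unfolding X by (simp only: integral_mult_right_zero integral_complex_of_real)
qed


lemma rat_int:
  assumes p: "p > 0" and b: "b \<in> QpZp p" and z: "rat_in_Zp p (b * of_nat (p ^ N))"
  shows "\<exists>a. a < p ^ N \<and> b * of_nat (p ^ N) = of_nat a"
proof -
  obtain a' n where a': "a' < p ^ n" "b = of_nat a' / of_nat (p ^ n)" using b by (auto simp: QpZp_def)
  define q where "q = b * of_nat (p ^ N)"
  obtain u v where quot: "quotient_of q = (u, v)" by (cases "quotient_of q") auto
  have v0: "v > 0" using quotient_of_denom_pos[OF quot] .
  have cop: "coprime u v" using quotient_of_coprime[OF quot] .
  have qd: "q = of_int u / of_int v" using quotient_of_div[OF quot] .
  have cvp: "coprime v (int p)" using z quot by (simp add: rat_in_Zp_def q_def)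
  have "q * of_nat (p ^ n) = of_nat (a' * p ^ N)" using p by (simp add: q_def a'(2))
  hence "of_int u / of_int v * of_int (int (p ^ n)) = (of_int (int (a' * p ^ N)) :: rat)" by (simp add: qd)
  hence "of_int (u * int (p ^ n)) = (of_int (int (a' * p ^ N) * v) :: rat)" using v0 by (simp add: field_simps)
  hence e: "u * int (p ^ n) = int (a' * p ^ N) * v" by (simp only: of_int_eq_iff)
  have "v dvd u * int (p ^ n)" unfolding e by simp
  hence "v dvd int (p ^ n)" using cop by (metis coprime_commute coprime_dvd_mult_right_iff)
  moreover have "coprime v (int (p ^ n))" using cvp by simp
  ultimately have "is_unit v" using coprime_common_divisor[of v "int (p ^ n)" v] by simp
  hence v1: "v = 1" using v0 by simp
  have qu: "q = of_int u" using qd v1 by simp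
  have "b \<ge> 0" using a'(2) by simp
  hence "q \<ge> 0" by (simp add: q_def)
  hence u0: "u \<ge> 0" using qu by simp
  have "b < 1" using a' p by simp
  hence "q < of_nat (p ^ N)" using p by (simp add: q_def)
  hence "u < int (p ^ N)" using qu by (metis of_int_less_iff of_int_of_nat_eq)
  hence "nat u < p ^ N" using u0 by (simp add: nat_less_iff)
  moreover have "b * of_nat (p ^ N) = of_nat (nat u)" using u0 qu q_def by simp
  ultimately show ?thesis by blast
qed

lemma cis_mod:
  assumes "P > 0"
  shows "cis (2 * pi * real k * of_int (X mod int P) / real P) = cis (2 * pi * real k * of_int X / real P)"
proof -
  have "X = X mod int P + int P * (X div int P)" by simp
  hence "of_int X = (of_int (X mod int P) + real P * of_int (X div int P) :: real)"
    by (metis of_int_add of_int_mult of_int_of_nat_eq)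
  hence "2 * pi * real k * of_int X / real P =
      2 * pi * real k * of_int (X mod int P) / real P + 2 * pi * of_int (int k * (X div int P))"
    using assms by (simp add: field_simps)
  then show ?thesis by (simp add: cis_mult[symmetric])
qed

lemma psi_cong:
  assumes "p > 0" "v mod int (p ^ Suc N) = v' mod int (p ^ Suc N)"
  shows "psi p N k v = psi p N k v'"
proof -
  have d: "int (p ^ N) dvd int (p ^ Suc N)" by (simp add: le_imp_power_dvd)
  have "v mod int (p ^ N) = v' mod int (p ^ N)"
    using assms(2) by (metis d mod_mod_cancel)
  hence dv: "int (p ^ N) dvd v \<longleftrightarrow> int (p ^ N) dvd v'" by (simp add: dvd_eq_mod_eq_0)
  have "cis (2 * pi * real k * of_int v / real (p ^ Suc N)) = cis (2 * pi * real k * of_int v' / real (p ^ Suc N))"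
    using cis_mod[of "p ^ Suc N" k v] cis_mod[of "p ^ Suc N" k v'] assms by simp
  then show ?thesis unfolding psi_def using dv by simp
qed


lemma Psi_form:
  assumes p: "p > 0" and r: "r \<le> 0" and b: "b \<in> QpZp p"
    and z: "rat_in_Zp p (b * of_nat (p ^ nat (- r)))"
  shows "\<exists>a < p ^ nat (- r). \<forall>y\<in>space (Haar p). Psi p r b k y =
     complex_of_real (real p powr (- real_of_int r / 2)) * psi p (nat (- r)) k (int (zp_trunc p (Suc (nat (- r))) y) - int a)"
proof -
  define N where "N = nat (- r)"
  obtain a where a: "a < p ^ N" "b * of_nat (p ^ N) = of_nat a"
    using rat_int[OF p b z[folded N_def]] by blast
  have L: "(LEAST N'::nat. - r \<le> int N' \<and> b * of_nat (p ^ N') \<in> \<int>) = N"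
  proof (rule Least_equality)
    show "- r \<le> int N \<and> b * of_nat (p ^ N) \<in> \<int>" using a(2) r by (simp add: N_def)
    fix y assume "- r \<le> int y \<and> b * of_nat (p ^ y) \<in> \<int>"
    then show "N \<le> y" by (simp add: N_def nat_le_iff)
  qed
  have fl: "nat \<lfloor>b * of_nat (p ^ N)\<rfloor> = a" using a(2) by simp
  have sh: "nat (r + int N) = 0" using r by (simp add: N_def)
  have sh0: "zp_shift 0 y = y" for y :: "nat \<Rightarrow> nat" by (simp add: zp_shift_def)
  have NM: "p ^ N dvd p ^ Suc N" by (simp add: le_imp_power_dvd)
  have aM: "a < p ^ Suc N"
  proof -
    have "p ^ N \<le> p ^ Suc N" using NM p by (simp add: dvd_imp_le)
    then show ?thesis using a(1) by linarith
  qed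
  show ?thesis
  proof (intro exI[of _ a] conjI ballI)
    show "a < p ^ nat (- r)" using a(1) by (simp add: N_def)
    fix y assume y: "y \<in> space (Haar p)"
    have dg: "\<forall>i. y i < p" using y by (simp add: space_Haar)
    define w where "w = zp_sub p y (zp_of_nat p a)"
    define X where "X = int (zp_trunc p (Suc N) y) - int a"
    have tN: "zp_trunc p N w = nat ((int (zp_trunc p N y) - int a) mod int (p ^ N))"
      using a(1) p by (simp add: w_def trunc_sub esub_def trunc_of_nat)
    have "int (zp_trunc p N y) = int (zp_trunc p (Suc N) y) mod int (p ^ N)"
    proof -
      have "zp_trunc p (Suc N) y mod p ^ N = zp_trunc p N y" using trunc_mod[of N "Suc N" y p] dg by simp
      hence "int (zp_trunc p N y) = int (zp_trunc p (Suc N) y mod p ^ N)" by simp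
      then show ?thesis by (simp only: of_nat_mod)
    qed
    hence "(int (zp_trunc p N y) - int a) mod int (p ^ N) = X mod int (p ^ N)"
      by (simp add: X_def mod_diff_left_eq)
    hence c1: "zp_trunc p N w = 0 \<longleftrightarrow> int (p ^ N) dvd X"
      using tN p by (simp add: dvd_eq_mod_eq_0 nat_eq_iff)
    have tM: "real (zp_trunc p (Suc N) w) = of_int (X mod int (p ^ Suc N))"
      using aM p by (simp add: w_def trunc_sub esub_def trunc_of_nat X_def)
    have c2: "cis (2 * pi * real k * real (zp_trunc p (Suc N) w) / real (p ^ Suc N)) =
          cis (2 * pi * real k * of_int X / real (p ^ Suc N))"
      unfolding tM using cis_mod[of "p ^ Suc N" k X] p by simp
    show "Psi p r b k y = complex_of_real (real p powr (- real_of_int r / 2)) *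
        psi p (nat (- r)) k (int (zp_trunc p (Suc (nat (- r))) y) - int a)"
      unfolding Psi_def Let_def L fl sh sh0 N_def[symmetric] psi_def X_def[symmetric] w_def[symmetric]
      using c1 c2 by simp
  qed
qed


theorem lemma7:
  fixes p :: nat and J :: "real \<Rightarrow> real"
  assumes "prime p"
    and "\<forall>t\<in>{0..1}. J t \<ge> 0"
    and "integrable (Haar p) (\<lambda>x. J (padic_abs p x))"
    and "(\<integral>x. J (padic_abs p x) \<partial>Haar p) = 1"
  shows "(\<forall>k r b. k \<in> {1..p - 1} \<and> r \<le> 0 \<and> b \<in> QpZp p \<and> rat_in_Zp p (b * of_nat (p ^ nat (- r)))
            \<longrightarrow> (\<forall>x\<in>space (Haar p).
                  Jop p J (Psi p r b k) x = (Jhat p J (nat (1 - r)) - 1) * Psi p r b k x))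
       \<and> (\<forall>x\<in>space (Haar p). Jop p J (\<lambda>_. 1) x = 0)"
proof -
  have p1: "p > 1" using assms(1) by (rule prime_gt_1_nat)
  hence p0: "p > 0" by simp
  have Jint: "integrable (Haar p) (\<lambda>z. complex_of_real (J (padic_abs p z)))"
    using assms(3) by (rule integrable_of_real)
  have Jm: "(\<lambda>z. complex_of_real (J (padic_abs p z))) \<in> borel_measurable (Haar p)"
    using Jint by (rule borel_measurable_integrable)
  have part2: "Jop p J (\<lambda>_. 1) x = 0" for x
  proof -
    have "(\<integral>y. complex_of_real (J (padic_abs p (zp_sub p x y))) * 1 \<partial>Haar p)
        = (\<integral>y. complex_of_real (J (padic_abs p (zp_sub p x y))) \<partial>Haar p)" by simp
    also have "\<dots> = (\<integral>z. complex_of_real (J (padic_abs p z)) \<partial>Haar p)"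
      by (rule subst_sub[OF p0 Jm, symmetric])
    also have "\<dots> = 1" using assms(4) by simp
    finally show ?thesis by (simp add: Jop_def)
  qed
  have part1: "Jop p J (Psi p r b k) x = (Jhat p J (nat (1 - r)) - 1) * Psi p r b k x"
    if k: "k \<in> {1..p - 1}" and r: "r \<le> 0" and b: "b \<in> QpZp p"
      and z: "rat_in_Zp p (b * of_nat (p ^ nat (- r)))" and x: "x \<in> space (Haar p)" for k r b x
  proof -
    define N where "N = nat (- r)"
    define C where "C = complex_of_real (real p powr (- real_of_int r / 2))"
    obtain a where a: "a < p ^ N"
      and PsiY: "\<And>y. y \<in> space (Haar p) \<Longrightarrow> Psi p r b k y = C * psi p N k (int (zp_trunc p (Suc N) y) - int a)"
      using Psi_form[OF p0 r b z, of k] unfolding N_def[symmetric] C_def[symmetric] by blast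
    have kp0: "\<not> p dvd k"
    proof
      assume "p dvd k"
      hence "p \<le> k" using k by (intro dvd_imp_le) auto
      thus False using k p0 by auto
    qed
    hence kp: "\<not> int p dvd int k" by simp
    define u where "u = int (zp_trunc p (Suc N) x) - int a"
    have Px: "Psi p r b k x = C * psi p N k u" using PsiY[OF x] by (simp add: u_def)
    have Psub: "Psi p r b k (zp_sub p x z) = C * psi p N k (u - int (zp_trunc p (Suc N) z))"
      if zs: "z \<in> space (Haar p)" for z
    proof -
      have sp: "zp_sub p x z \<in> space (Haar p)" using dig_sub[OF p0] by (simp add: space_Haar)
      have "int (zp_trunc p (Suc N) (zp_sub p x z)) =
          (int (zp_trunc p (Suc N) x) - int (zp_trunc p (Suc N) z)) mod int (p ^ Suc N)"
        using p0 by (simp add: trunc_sub[OF p0] esub_def)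
      hence "(int (zp_trunc p (Suc N) (zp_sub p x z)) - int a) mod int (p ^ Suc N) =
          (u - int (zp_trunc p (Suc N) z)) mod int (p ^ Suc N)"
        by (simp add: mod_diff_left_eq u_def algebra_simps)
      hence "psi p N k (int (zp_trunc p (Suc N) (zp_sub p x z)) - int a) = psi p N k (u - int (zp_trunc p (Suc N) z))"
        by (rule psi_cong[OF p0])
      then show ?thesis using PsiY[OF sp] by simp
    qed
    define h where "h c = C * psi p N k (u - int c)" for c
    define E where "E c = cis (2 * pi * real c / real (p ^ Suc N))" for c
    have hm: "(\<lambda>z. h (zp_trunc p (Suc N) z)) \<in> borel_measurable (Haar p)"
      by (rule measurable_compose[OF trunc_meas]) simp
    have fm: "(\<lambda>z. complex_of_real (J (padic_abs p z))
        * Psi p r b k (zp_sub p x z)) \<in> borel_measurable (Haar p)"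
    proof -
      have "(\<lambda>z. complex_of_real (J (padic_abs p z)) * h (zp_trunc p (Suc N) z)) \<in> borel_measurable (Haar p)"
        by (rule borel_measurable_times[OF Jm hm])
      then show ?thesis
        by (rule measurable_cong[THEN iffD1, rotated]) (simp add: Psub h_def)
    qed
    have conv: "(\<integral>y. complex_of_real (J (padic_abs p (zp_sub p x y))) * Psi p r b k y \<partial>Haar p) =
        (\<integral>z. complex_of_real (J (padic_abs p z)) * h (zp_trunc p (Suc N) z) \<partial>Haar p)"
    proof -
      have "(\<integral>y. complex_of_real (J (padic_abs p (zp_sub p x y))) * Psi p r b k y \<partial>Haar p) =
          (\<integral>y. complex_of_real (J (padic_abs p (zp_sub p x y))) * Psi p r b k (zp_sub p x (zp_sub p x y)) \<partial>Haar p)"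
        by (rule Bochner_Integration.integral_cong[OF refl]) (simp add: sub_sub[OF p0] space_Haar)
      also have "\<dots> = (\<integral>z. complex_of_real (J (padic_abs p z)) * Psi p r b k (zp_sub p x z) \<partial>Haar p)"
        by (rule subst_sub[OF p0 fm, symmetric])
      also have "\<dots> = (\<integral>z. complex_of_real (J (padic_abs p z)) * h (zp_trunc p (Suc N) z) \<partial>Haar p)"
        by (rule Bochner_Integration.integral_cong[OF refl]) (simp add: Psub h_def)
      finally show ?thesis .
    qed
    have nr: "nat (1 - r) = Suc N" using r by (simp add: N_def)
    have jh: "Jhat p J (nat (1 - r)) =
        (\<integral>z. complex_of_real (J (padic_abs p z)) * E (zp_trunc p (Suc N) z) \<partial>Haar p)"
      unfolding Jhat_def FT_Zp_def nr E_def by (simp add: mult.commute)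
    define A where "A = complex_of_real (\<integral>z. J (padic_abs p z) * indicator {z\<in>space (Haar p). zp_trunc p (Suc N) z = 0} z \<partial>Haar p)"
    define w where "w = (\<lambda>m. complex_of_real (J (real p powr (- real m))))"
    define \<rho> where "\<rho> = complex_of_real ((1 / real p) ^ Suc N)"
    have I1: "(\<integral>z. complex_of_real (J (padic_abs p z)) * h (zp_trunc p (Suc N) z) \<partial>Haar p)
        = h 0 * A + (\<Sum>c<p ^ Suc N. h c * Wt p w c) * \<rho>"
      unfolding A_def w_def \<rho>_def by (rule int_decomp[OF p0 assms(3)])
    have I2: "(\<integral>z. complex_of_real (J (padic_abs p z)) * E (zp_trunc p (Suc N) z) \<partial>Haar p)
        = E 0 * A + (\<Sum>c<p ^ Suc N. E c * Wt p w c) * \<rho>"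
      unfolding A_def w_def \<rho>_def by (rule int_decomp[OF p0 assms(3)])
    have E0: "E 0 = 1" by (simp add: E_def)
    have h0: "h 0 = C * psi p N k u" by (simp add: h_def)
    have ms: "(\<Sum>c<p ^ Suc N. psi p N k (u - int c) * Wt p w c) = psi p N k u * (\<Sum>c<p ^ Suc N. E c * Wt p w c)"
      unfolding E_def by (rule main_sum[OF p1 kp])
    have hs: "(\<Sum>c<p ^ Suc N. h c * Wt p w c) = C * psi p N k u * (\<Sum>c<p ^ Suc N. E c * Wt p w c)"
    proof -
      have "(\<Sum>c<p ^ Suc N. h c * Wt p w c) = C * (\<Sum>c<p ^ Suc N. psi p N k (u - int c) * Wt p w c)"
        by (simp add: h_def sum_distrib_left mult.assoc)
      then show ?thesis using ms by simp
    qed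
    have "Jop p J (Psi p r b k) x = h 0 * A + (\<Sum>c<p ^ Suc N. h c * Wt p w c) * \<rho> - C * psi p N k u"
      unfolding Jop_def conv I1 Px ..
    also have "\<dots> = (E 0 * A + (\<Sum>c<p ^ Suc N. E c * Wt p w c) * \<rho> - 1) * (C * psi p N k u)"
      unfolding h0 hs E0 by (simp add: algebra_simps)
    also have "\<dots> = (Jhat p J (nat (1 - r)) - 1) * Psi p r b k x"
      unfolding jh I2 Px ..
    finally show ?thesis .
  qed
  show ?thesis using part1 part2 by blast
qed

end
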